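(* Let $n\ge2$ and $W_n=(w_{ij},\ 1\le j<i\le n)$ with $w_{ij}>0$. Then for $1\le j\le n-1$, $$\tau^n_j(T^\triangle_n(W_n))=\prod_{\ell=1}^{j-1}w_{j\ell}\prod_{k=j+1}^nw_{kj}.$$
   Context: Triangular arrays are $X=(x_{ij},\ 1\le j<i\le n)$ of positive reals. Their type is $\tau^n_j(X)=D_{nj}(X)/D_{n,j-1}(X)$ where $D_{n0}(X)=1$ and $D_{nj}(X)=x_{nj}x_{n-1,j-1}\cdots x_{n-j+1,1}$ for $1\le j\le n-1$. Local maps: for $i\ge3$, $l_{i1}$ replaces $x_{i1}$ by $x_{i-1,1}x_{i1}$; for $2\le j$ with $j+1<i$, $l_{ij}$ replaces $(x_{i-1,j-1},x_{i-1,j},x_{i,j-1},x_{ij})=(a,b,c,d)$ by $(bc/(ab+ac),b,c,d(b+c))$, other entries unchanged. For $1\le j\le n-2$, $\rho^{\triangle,n}_j=l_{n-j+1,1}\circ l_{n-j+2,2}\circ\cdots\circ l_{n-1,j-1}\circ l_{nj}$. $r^\triangle_{n,n-1}$ replaces $x_{n,n-1}$ by $1/x_{n,n-1}$. With conventions $x_{i0}=1$, $x_{n+1,n-1}=1$: for $k=0,\dots,\lfloor n/2\rfloor-1$, $b^{\triangle,n}_{n-2k,n-2k-1}$ replaces $x_{n-2k,n-2k-1}$ by $x_{n-2k+1,n-2k-1}x_{n-2k,n-2k-2}/x_{n-2k,n-2k-1}$; for $k=1,\dots,\lfloor(n-1)/2\rfloor$, $b^{\triangle,n}_{n-2k+1,n-2k}$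 is the identity. $\rho^{\triangle,n}_{n-1}=b^{\triangle,n}_{2,1}\circ\cdots\circ b^{\triangle,n}_{n,n-1}\circ r^\triangle_{n,n-1}$, $R^\triangle_n=\rho^{\triangle,n}_{n-1}\circ\cdots\circ\rho^{\triangle,n}_1$. $T^\triangle_2(x_{21})=x_{21}$ and for $n\ge3$, $T^\triangle_n(X_n)=R^\triangle_n$ applied to the array whose first $n-1$ rows are $T^\triangle_{n-1}(x_{ij},\ 1\le j<i\le n-1)$ and whose last row is $(x_{n1},\dots,x_{n,n-1})$. *)

theory Defs
  imports Complex_Main
begin

text \<open>A triangular array X = (x_ij, 1 <= j < i <= n) is represented as a function
  X :: nat => nat => real, X i j = x_ij; entries outside the triangle are irrelevant.\<close>

type_synonym tarray = "nat \<Rightarrow> nat \<Rightarrow> real"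

definition D :: "nat \<Rightarrow> nat \<Rightarrow> tarray \<Rightarrow> real" where
  "D n j X = (\<Prod>k<j. X (n - k) (j - k))"

definition tau :: "nat \<Rightarrow> nat \<Rightarrow> tarray \<Rightarrow> real" where
  "tau n j X = D n j X / D n (j - 1) X"

definition lmap :: "nat \<Rightarrow> nat \<Rightarrow> tarray \<Rightarrow> tarray" where
  "lmap i j X =
     (if j = 1 then X(i := (X i)(1 := X (i - 1) 1 * X i 1))
      else (let a = X (i - 1) (j - 1); b = X (i - 1) j; c = X i (j - 1); d = X i j
            in (X(i - 1 := (X (i - 1))(j - 1 := b * c / (a * b + a * c))))
                 (i := (X i)(j := d * (b + c)))))"

text \<open>rho_j = l_{n-j+1,1} o l_{n-j+2,2} o ... o l_{n,j}: l_{n,j} is applied first.\<close>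
definition rho :: "nat \<Rightarrow> nat \<Rightarrow> tarray \<Rightarrow> tarray" where
  "rho n j X = foldl (\<lambda>Y m. lmap (n - j + m) m Y) X (rev [1..<j+1])"

definition rmap :: "nat \<Rightarrow> tarray \<Rightarrow> tarray" where
  "rmap n X = X(n := (X n)(n - 1 := 1 / X n (n - 1)))"

text \<open>Entry access with the conventions x_{i0} = 1 and x_{n+1,n-1} = 1.\<close>
definition getc :: "nat \<Rightarrow> tarray \<Rightarrow> nat \<Rightarrow> nat \<Rightarrow> real" where
  "getc n X i j = (if j = 0 then 1 else if i = n + 1 \<and> j = n - 1 then 1 else X i j)"

definition bmap :: "nat \<Rightarrow> nat \<Rightarrow> tarray \<Rightarrow> tarray" where
  "bmap n i X =
     (if even (n - i) then
        X(i := (X i)(i - 1 := getc n X (i + 1) (i - 1) * getc n X i (i - 2) / X i (i - 1)))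
      else X)"

text \<open>rho_{n-1} = b_{2,1} o ... o b_{n,n-1} o r_{n,n-1}.\<close>
definition rho_last :: "nat \<Rightarrow> tarray \<Rightarrow> tarray" where
  "rho_last n X = foldl (\<lambda>Y i. bmap n i Y) (rmap n X) (rev [2..<n+1])"

definition rho_full :: "nat \<Rightarrow> nat \<Rightarrow> tarray \<Rightarrow> tarray" where
  "rho_full n j X = (if j = n - 1 then rho_last n X else rho n j X)"

text \<open>R_n = rho_{n-1} o ... o rho_1: rho_1 is applied first.\<close>
definition Rmap :: "nat \<Rightarrow> tarray \<Rightarrow> tarray" where
  "Rmap n X = foldl (\<lambda>Y j. rho_full n j Y) X [1..<n]"

fun Ttri :: "nat \<Rightarrow> tarray \<Rightarrow> tarray" where
  "Ttri n X = (if n \<le> 2 then X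
               else Rmap n (\<lambda>i j. if i = n then X i j else Ttri (n - 1) X i j))"

end

theory Submission
  imports Defs
begin

declare Ttri.simps[simp del]

definition pos :: "nat \<Rightarrow> tarray \<Rightarrow> bool" where
  "pos N X \<longleftrightarrow> (\<forall>i j. 1 \<le> j \<longrightarrow> j < i \<longrightarrow> i \<le> N \<longrightarrow> X i j > 0)"

definition chain :: "nat \<Rightarrow> nat \<Rightarrow> tarray \<Rightarrow> tarray" where
  "chain s k X = foldl (\<lambda>Y m. lmap (s + m) m Y) X (rev [1..<k+1])"

definition Sst :: "nat \<Rightarrow> nat \<Rightarrow> tarray \<Rightarrow> tarray" where
  "Sst n k X = foldl (\<lambda>Y j. rho_full n j Y) X [1..<k+1]"

definition Qf :: "nat \<Rightarrow> tarray \<Rightarrow> real" where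
  "Qf m X = (\<Prod>k<m-1. if odd k then 1 / X (m-k) (m-1-k) else X (m-k) (m-1-k))"

lemma lmap_1: "lmap i (Suc 0) X p q = (if p = i \<and> q = 1 then X (i-1) 1 * X i 1 else X p q)"
  by (simp add: lmap_def)

lemma lmap_ge2: "j \<noteq> 1 \<Longrightarrow> 1 \<le> i \<Longrightarrow> lmap i j X p q =
  (if p = i \<and> q = j then X i j * (X (i-1) j + X i (j-1))
   else if p = i-1 \<and> q = j-1 then X (i-1) j * X i (j-1) / (X (i-1) (j-1) * X (i-1) j + X (i-1) (j-1) * X i (j-1))
   else X p q)"
  by (auto simp: lmap_def Let_def)

lemma chain_0[simp]: "chain s 0 X = X" by (simp add: chain_def)
lemma chain_Suc: "chain s (Suc k) X = chain s k (lmap (s + Suc k) (Suc k) X)"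
  by (simp add: chain_def)

lemma rho_chain: "rho n j X = chain (n - j) j X"
  by (simp add: rho_def chain_def)

lemma chain_frame: "\<not> (p = q + s \<and> 1 \<le> q \<and> q \<le> k) \<Longrightarrow> chain s k X p q = X p q"
proof (induction k arbitrary: X)
  case 0 then show ?case by simp
next
  case (Suc k)
  have "chain s (Suc k) X p q = lmap (s + Suc k) (Suc k) X p q"
    unfolding chain_Suc by (rule Suc.IH) (use Suc.prems in auto)
  also have "\<dots> = X p q"
  proof (cases "k = 0")
    case True then show ?thesis using Suc.prems by (auto simp add: lmap_1)
  next
    case False then show ?thesis using Suc.prems by (auto simp: lmap_ge2)
  qed
  finally show ?case .
qed

lemma pos_lmap: assumes "pos N X" "1 \<le> j" "j + 1 < i" "i \<le> N"
  shows "pos N (lmap i j X)"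
proof (cases "j = 1")
  case True
  then show ?thesis using assms unfolding pos_def
    by (auto simp: lmap_1 intro!: mult_pos_pos)
next
  case False
  have a: "X (i-1) (j-1) > 0" "X (i-1) j > 0" "X i (j-1) > 0" "X i j > 0"
    using assms False unfolding pos_def by auto
  show ?thesis using assms False a unfolding pos_def
    by (auto simp: lmap_ge2 intro!: mult_pos_pos divide_pos_pos add_pos_pos)
qed

lemma pos_chain: "pos N X \<Longrightarrow> 2 \<le> s \<Longrightarrow> s + k \<le> N \<Longrightarrow> pos N (chain s k X)"
proof (induction k arbitrary: X)
  case 0 then show ?case by simp
next
  case (Suc k)
  have "pos N (lmap (s + Suc k) (Suc k) X)"
    using Suc.prems by (intro pos_lmap) auto
  then show ?case using Suc by (simp add: chain_Suc)
qed

lemma D_0[simp]: "D n 0 X = 1" by (simp add: D_def)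
lemma D_Suc: "D n (Suc j) X = X n (Suc j) * D (n - 1) j X"
  unfolding D_def prod.lessThan_Suc_shift by simp

lemma D_cong: "(\<And>i. i < j \<Longrightarrow> X (n-i) (j-i) = Y (n-i) (j-i)) \<Longrightarrow> D n j X = D n j Y"
  unfolding D_def by (rule prod.cong) auto

lemma D_pos: "pos N X \<Longrightarrow> j < n \<Longrightarrow> n \<le> N \<Longrightarrow> D n j X > 0"
  unfolding D_def pos_def by (intro prod_pos) auto

lemma chain_D:
  assumes "2 \<le> s" "s + Suc k \<le> N" "pos N X"
  shows "D (s + Suc k) (Suc k) (chain s (Suc k) X) * D (s+k) k X
         = X (s + Suc k) (Suc k) * D (s+k) (Suc k) X * D (s + Suc k) k X"
  using assms
proof (induction k arbitrary: X)
  case 0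
  then show ?case by (simp add: D_Suc chain_Suc lmap_1)
next
  case (Suc k)
  define X' where "X' = lmap (s + Suc (Suc k)) (Suc (Suc k)) X"
  have posX': "pos N X'" unfolding X'_def using Suc.prems by (intro pos_lmap) auto
  have h1: "chain s (Suc (Suc k)) X = chain s (Suc k) X'"
    by (simp add: chain_Suc X'_def)
  have h2: "chain s (Suc k) X' (s + Suc (Suc k)) (Suc (Suc k)) = X' (s + Suc (Suc k)) (Suc (Suc k))"
    by (rule chain_frame) auto
  have h3: "D (s + Suc k) (Suc k) (chain s (Suc k) X') * D (s+k) k X'
         = X' (s + Suc k) (Suc k) * D (s+k) (Suc k) X' * D (s + Suc k) k X'"
    using Suc.IH[of X'] Suc.prems posX' by auto
  have lm: "X' p q = X p q" if "\<not> (p = s + Suc (Suc k) \<and> q = Suc (Suc k))"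
      "\<not> (p = s + Suc k \<and> q = Suc k)" for p q
    using that unfolding X'_def by (auto simp: lmap_ge2)
  have h4: "D (s+k) k X' = D (s+k) k X" by (rule D_cong) (rule lm; auto)
  have h5: "D (s+k) (Suc k) X' = D (s+k) (Suc k) X" by (rule D_cong) (rule lm; auto)
  have h6: "D (s + Suc k) k X' = D (s + Suc k) k X" by (rule D_cong) (rule lm; auto)
  define a where "a = X (s + Suc k) (Suc k)"
  define b where "b = X (s + Suc k) (Suc (Suc k))"
  define c where "c = X (s + Suc (Suc k)) (Suc k)"
  define d where "d = X (s + Suc (Suc k)) (Suc (Suc k))"
  have pa: "a > 0" "b > 0" "c > 0" using Suc.prems unfolding pos_def a_def b_def c_def by auto
  have h7: "X' (s + Suc k) (Suc k) = b * c / (a * b + a * c)"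
    unfolding X'_def a_def b_def c_def by (simp add: lmap_ge2)
  have h8: "X' (s + Suc (Suc k)) (Suc (Suc k)) = d * (b + c)"
    unfolding X'_def b_def c_def d_def by (simp add: lmap_ge2)
  have e1: "D (s + Suc (Suc k)) (Suc (Suc k)) (chain s (Suc (Suc k)) X)
      = d * (b + c) * D (s + Suc k) (Suc k) (chain s (Suc k) X')"
    using h1 h2 h8 by (simp add: D_Suc)
  have e2: "D (s + Suc k) (Suc k) X = a * D (s+k) k X" by (simp add: D_Suc a_def)
  have e3: "D (s + Suc k) (Suc (Suc k)) X = b * D (s+k) (Suc k) X" by (simp add: D_Suc b_def)
  have e4: "D (s + Suc (Suc k)) (Suc k) X = c * D (s + Suc k) k X" by (simp add: D_Suc c_def)
  have h3': "D (s + Suc k) (Suc k) (chain s (Suc k) X') * D (s+k) k X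
         = b * c / (a * b + a * c) * D (s+k) (Suc k) X * D (s + Suc k) k X"
    using h3 h4 h5 h6 h7 by simp
  have "D (s + Suc (Suc k)) (Suc (Suc k)) (chain s (Suc (Suc k)) X) * D (s + Suc k) (Suc k) X
      = d * (b + c) * a * (D (s + Suc k) (Suc k) (chain s (Suc k) X') * D (s+k) k X)"
    using e1 e2 by simp
  also have "\<dots> = d * (b + c) * a * (b * c / (a * b + a * c) * D (s+k) (Suc k) X * D (s + Suc k) k X)"
    using h3' by simp
  also have "\<dots> = d * (b * D (s+k) (Suc k) X) * (c * D (s + Suc k) k X)"
  proof -
    have nz: "a * b + a * c > 0" using pa by (simp add: add_pos_pos)
    then show ?thesis by (simp add: field_simps)
  qed
  finally show ?case using e3 e4 d_def by simp
qed

lemma rmap_at: "rmap n X p q = (if p = n \<and> q = n - 1 then 1 / X n (n-1) else X p q)"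
  by (simp add: rmap_def)

lemma bmap_at: "bmap n i X p q = (if even (n - i) \<and> p = i \<and> q = i - 1
   then getc n X (i+1) (i-1) * getc n X i (i-2) / X i (i-1) else X p q)"
  by (simp add: bmap_def)

lemma getc_bmap: "\<not> (x = a \<and> y = a - 1) \<Longrightarrow> getc n (bmap n a Z) x y = getc n Z x y"
  by (auto simp: getc_def bmap_at)

lemma bmaps: "distinct L \<Longrightarrow> \<forall>a\<in>set L. 2 \<le> a \<Longrightarrow>
  foldl (\<lambda>Y i. bmap n i Y) Z L p q =
   (if p \<in> set L \<and> q = p - 1 \<and> even (n - p)
    then getc n Z (p+1) (p-1) * getc n Z p (p-2) / Z p (p-1) else Z p q)"
proof (induction L arbitrary: Z)
  case Nil then show ?case by simp
next
  case (Cons a L)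
  have IH: "foldl (\<lambda>Y i. bmap n i Y) (bmap n a Z) L p q =
   (if p \<in> set L \<and> q = p - 1 \<and> even (n - p)
    then getc n (bmap n a Z) (p+1) (p-1) * getc n (bmap n a Z) p (p-2) / bmap n a Z p (p-1)
    else bmap n a Z p q)"
    using Cons by auto
  show ?case
  proof (cases "p \<in> set L \<and> q = p - 1 \<and> even (n - p)")
    case True
    then have p2: "p \<ge> 2" "p \<noteq> a" using Cons.prems by auto
    have g1: "getc n (bmap n a Z) (p+1) (p-1) = getc n Z (p+1) (p-1)"
      by (rule getc_bmap) (use p2 in auto)
    have g2: "getc n (bmap n a Z) p (p-2) = getc n Z p (p-2)"
      by (rule getc_bmap) (use p2 in auto)
    have g3: "bmap n a Z p (p-1) = Z p (p-1)" using p2 by (simp add: bmap_at)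
    show ?thesis using True IH g1 g2 g3 by simp
  next
    case False
    have b: "bmap n a Z p q = (if even (n - a) \<and> p = a \<and> q = a - 1
      then getc n Z (a+1) (a-1) * getc n Z a (a-2) / Z a (a-1) else Z p q)" by (rule bmap_at)
    show ?thesis using False IH b Cons.prems by auto
  qed
qed

lemma rho_last_at:
  assumes "2 \<le> n"
  shows "rho_last n X p q = (if 2 \<le> p \<and> p \<le> n \<and> q = p - 1 \<and> even (n - p)
    then getc n X (p+1) (p-1) * getc n X p (p-2) / (if p = n then 1 / X n (n-1) else X p (p-1))
    else X p q)"
proof -
  have d: "distinct (rev [2..<n+1])" by simp
  have s: "set (rev [2..<n+1]) = {2..n}" by auto
  have "rho_last n X p q = foldl (\<lambda>Y i. bmap n i Y) (rmap n X) (rev [2..<n+1]) p q"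
    by (simp only: rho_last_def)
  also have "\<dots> = (if p \<in> set (rev [2..<n+1]) \<and> q = p - 1 \<and> even (n - p)
    then getc n (rmap n X) (p+1) (p-1) * getc n (rmap n X) p (p-2) / rmap n X p (p-1) else rmap n X p q)"
    by (rule bmaps[OF d]) auto
  finally have "rho_last n X p q = (if p \<in> {2..n} \<and> q = p - 1 \<and> even (n - p)
    then getc n (rmap n X) (p+1) (p-1) * getc n (rmap n X) p (p-2) / rmap n X p (p-1) else rmap n X p q)"
    unfolding s .
  moreover have "2 \<le> p \<Longrightarrow> getc n (rmap n X) (p+1) (p-1) = getc n X (p+1) (p-1)"
    by (auto simp: getc_def rmap_at)
  moreover have "2 \<le> p \<Longrightarrow> getc n (rmap n X) p (p-2) = getc n X p (p-2)"
    by (auto simp: getc_def rmap_at)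
  ultimately show ?thesis using assms by (auto simp: rmap_at)
qed

lemma rho_last_frame: "2 \<le> n \<Longrightarrow> \<not> (q + 1 = p \<and> 2 \<le> p \<and> p \<le> n) \<Longrightarrow> rho_last n X p q = X p q"
  by (auto simp: rho_last_at)

lemma getc_pos: "pos n X \<Longrightarrow> 2 \<le> p \<Longrightarrow> p \<le> n \<Longrightarrow> getc n X (p+1) (p-1) > 0 \<and> getc n X p (p-2) > 0"
  unfolding getc_def pos_def by auto

lemma pos_rho_last: assumes "pos n X" "2 \<le> n" shows "pos n (rho_last n X)"
  unfolding pos_def
proof (intro allI impI)
  fix i j assume h: "1 \<le> j" "j < i" "i \<le> n"
  have xp: "X i j > 0" using h assms unfolding pos_def by auto
  show "rho_last n X i j > 0"
  proof (cases "2 \<le> i \<and> i \<le> n \<and> j = i - 1 \<and> even (n - i)")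
    case True
    then have g: "getc n X (i+1) (i-1) > 0" "getc n X i (i-2) > 0" "X i (i-1) > 0" "X n (n-1) > 0"
      using getc_pos[OF assms(1), of i] xp assms unfolding pos_def by auto
    have e: "rho_last n X i j = getc n X (i+1) (i-1) * getc n X i (i-2) / (if i = n then 1 / X n (n-1) else X i (i-1))"
      by (simp only: rho_last_at[OF assms(2)] if_P[OF True])
    show ?thesis unfolding e using g by auto
  next
    case False
    have "rho_last n X i j = X i j" by (simp only: rho_last_at[OF assms(2)] if_not_P[OF False])
    then show ?thesis using xp by simp
  qed
qed

lemma alt_prod1:
  fixes R u x :: "nat \<Rightarrow> real"
  assumes "\<And>k. k < K \<Longrightarrow> R k = (if k = 0 then u 0 * x 0 else if even k then u (k-1) * u k / x k else x k)"
    "\<And>k. k < K \<Longrightarrow> u k > 0 \<and> x k > 0" "1 \<le> K"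
  shows "(\<Prod>k<K. R k) = x 0 * (\<Prod>k<K. u k) * (\<Prod>k<K-1. if odd k then 1 / x (k+1) else x (k+1))
     / (if even K then u (K-1) else 1)"
  using assms
proof (induction K)
  case 0 then show ?case by simp
next
  case (Suc K)
  show ?case
  proof (cases "K = 0")
    case True then show ?thesis using Suc.prems by simp
  next
    case False
    define sg where "sg = (\<lambda>k. if odd k then 1 / x (k+1) else x (k+1))"
    have IH: "(\<Prod>k<K. R k) = x 0 * (\<Prod>k<K. u k) * (\<Prod>k<K-1. sg k)
       / (if even K then u (K-1) else 1)" using Suc False unfolding sg_def by auto
    have RK: "R K = (if even K then u (K-1) * u K / x K else x K)" using Suc False by auto
    have pu: "u K > 0" "u (K-1) > 0" "x K > 0" using Suc.prems(2)[of K] Suc.prems(2)[of "K-1"] by auto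
    have S: "(\<Prod>k<Suc K - 1. sg k) = (\<Prod>k<K-1. sg k) * sg (K-1)"
      using False by (metis Suc_diff_1 diff_Suc_1 neq0_conv prod.lessThan_Suc)
    have par: "odd (K-1) \<longleftrightarrow> even K" using False by (cases K) auto
    have L: "(\<Prod>k<Suc K. R k) = (\<Prod>k<K. R k) * R K" by simp
    have U: "(\<Prod>k<Suc K. u k) = (\<Prod>k<K. u k) * u K" by simp
    have sgK: "sg (K-1) = (if even K then 1 / x K else x K)" using par False unfolding sg_def by auto
    show ?thesis
      unfolding sg_def[symmetric] L U S IH RK sgK using pu
      by (cases "even K") (simp_all add: field_simps)
  qed
qed

lemma alt_prod2:
  fixes R u x :: "nat \<Rightarrow> real"
  assumes "\<And>k. k < K \<Longrightarrow> R k = (if k = 0 then u 0 * x 0 else if even k then u (k-1) * u k / x k else x k)"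
    "\<And>k. k < K \<Longrightarrow> u k > 0 \<and> x k > 0" "1 \<le> K"
  shows "(\<Prod>k<K. if odd k then 1 / R k else R k) = x 0 * (\<Prod>k<K. u k) / (\<Prod>k<K-1. x (k+1))
     / (if even K then u (K-1) else 1)"
  using assms
proof (induction K)
  case 0 then show ?case by simp
next
  case (Suc K)
  show ?case
  proof (cases "K = 0")
    case True then show ?thesis using Suc.prems by simp
  next
    case False
    define sg where "sg = (\<lambda>k. x (k+1))"
    define rr where "rr = (\<lambda>k. if odd k then 1 / R k else R k)"
    have IH: "(\<Prod>k<K. rr k) = x 0 * (\<Prod>k<K. u k) / (\<Prod>k<K-1. sg k)
       / (if even K then u (K-1) else 1)" using Suc False unfolding sg_def rr_def by auto
    have RK: "rr K = (if even K then u (K-1) * u K / x K else 1 / x K)" using Suc False unfolding rr_def by auto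
    have pu: "u K > 0" "u (K-1) > 0" "x K > 0" using Suc.prems(2)[of K] Suc.prems(2)[of "K-1"] by auto
    have pp: "(\<Prod>k<K-1. sg k) > 0" using Suc.prems(2) unfolding sg_def by (intro prod_pos) auto
    have S: "(\<Prod>k<Suc K - 1. sg k) = (\<Prod>k<K-1. sg k) * sg (K-1)"
      using False by (metis Suc_diff_1 diff_Suc_1 neq0_conv prod.lessThan_Suc)
    have L: "(\<Prod>k<Suc K. rr k) = (\<Prod>k<K. rr k) * rr K" by simp
    have U: "(\<Prod>k<Suc K. u k) = (\<Prod>k<K. u k) * u K" by simp
    have sgK: "sg (K-1) = x K" using False unfolding sg_def by auto
    show ?thesis
      unfolding sg_def[symmetric] rr_def[symmetric] L U S IH RK sgK using pu pp
      by (cases "even K") (simp_all add: field_simps)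
  qed
qed

lemma rho_last_R:
  assumes "2 \<le> n" "k < n - 1"
  shows "rho_last n X (n-k) (n-1-k) = (if k = 0 then getc n X n (n-2) * X n (n-1)
     else if even k then getc n X (n-(k-1)) (n-2-(k-1)) * getc n X (n-k) (n-2-k) / X (n-k) (n-1-k)
     else X (n-k) (n-1-k))"
proof -
  have e: "rho_last n X (n-k) (n-1-k) = (if 2 \<le> n-k \<and> n-k \<le> n \<and> n-1-k = n-k-1 \<and> even (n-(n-k))
    then getc n X (n-k+1) (n-k-1) * getc n X (n-k) (n-k-2) / (if n-k = n then 1 / X n (n-1) else X (n-k) (n-k-1))
    else X (n-k) (n-1-k))" by (rule rho_last_at[OF assms(1)])
  have a1: "2 \<le> n-k" "n-k \<le> n" "n-1-k = n-k-1" "n-(n-k) = k" "n-k-2 = n-2-k" using assms by auto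
  show ?thesis
  proof (cases "k = 0")
    case True
    have "getc n X (n+1) (n-1) = 1" using assms by (simp add: getc_def)
    then show ?thesis using True e assms by simp
  next
    case False
    have a2: "n-k+1 = n-(k-1)" "n-k-1 = n-2-(k-1)" "n - k \<noteq> n" using assms False by auto
    show ?thesis using e a1 a2 False by simp
  qed
qed

lemma last_facts:
  assumes "3 \<le> n" "pos n X"
  shows "\<And>k. k < n - 1 \<Longrightarrow> rho_last n X (n-k) (n-1-k) = (if k = 0 then getc n X (n-0) (n-2-0) * X (n-0) (n-1-0)
     else if even k then getc n X (n-(k-1)) (n-2-(k-1)) * getc n X (n-k) (n-2-k) / X (n-k) (n-1-k)
     else X (n-k) (n-1-k))"
    and "\<And>k. k < n - 1 \<Longrightarrow> getc n X (n-k) (n-2-k) > 0 \<and> X (n-k) (n-1-k) > 0"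
    and "(\<Prod>k<n-1. getc n X (n-k) (n-2-k)) = D n (n-2) X"
    and "getc n X (n-(n-1-1)) (n-2-(n-1-1)) = 1"
proof -
  fix k assume k: "k < n - 1"
  show "rho_last n X (n-k) (n-1-k) = (if k = 0 then getc n X (n-0) (n-2-0) * X (n-0) (n-1-0)
     else if even k then getc n X (n-(k-1)) (n-2-(k-1)) * getc n X (n-k) (n-2-k) / X (n-k) (n-1-k)
     else X (n-k) (n-1-k))" using rho_last_R[of n k X] k assms by simp
  have "getc n X (n-k) (n-k-2) > 0" using getc_pos[OF assms(2), of "n-k"] k assms by auto
  moreover have "X (n-k) (n-1-k) > 0" using assms(2) k unfolding pos_def by auto
  moreover have "n-k-2 = n-2-k" by simp
  ultimately show "getc n X (n-k) (n-2-k) > 0 \<and> X (n-k) (n-1-k) > 0" by simp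
next
  have sp: "n - 1 = Suc (n - 2)" using assms by simp
  have "(\<Prod>k<n-1. getc n X (n-k) (n-2-k)) = (\<Prod>k<n-2. getc n X (n-k) (n-2-k)) * getc n X (n-(n-2)) (n-2-(n-2))"
    unfolding sp by simp
  also have "getc n X (n-(n-2)) (n-2-(n-2)) = 1" by (simp add: getc_def)
  also have "(\<Prod>k<n-2. getc n X (n-k) (n-2-k)) = D n (n-2) X"
    unfolding D_def by (rule prod.cong) (auto simp: getc_def)
  finally show "(\<Prod>k<n-1. getc n X (n-k) (n-2-k)) = D n (n-2) X" by simp
next
  show "getc n X (n-(n-1-1)) (n-2-(n-1-1)) = 1" by (simp add: getc_def)
qed

lemma P1:
  assumes "3 \<le> n" "pos n X"
  shows "D n (n-1) (rho_last n X) = X n (n-1) * D n (n-2) X * Qf (n-1) X"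
proof -
  have "D n (n-1) (rho_last n X) = (\<Prod>k<n-1. rho_last n X (n-k) (n-1-k))" by (simp add: D_def)
  also have "\<dots> = X (n-0) (n-1-0) * (\<Prod>k<n-1. getc n X (n-k) (n-2-k)) *
      (\<Prod>k<n-1-1. if odd k then 1 / X (n-(k+1)) (n-1-(k+1)) else X (n-(k+1)) (n-1-(k+1)))
     / (if even (n-1) then getc n X (n-(n-1-1)) (n-2-(n-1-1)) else 1)"
    by (rule alt_prod1[where R = "\<lambda>k. rho_last n X (n-k) (n-1-k)" and u = "\<lambda>k. getc n X (n-k) (n-2-k)"
        and x = "\<lambda>k. X (n-k) (n-1-k)"]) (use last_facts[OF assms] assms in auto)
  also have "(\<Prod>k<n-1-1. if odd k then 1 / X (n-(k+1)) (n-1-(k+1)) else X (n-(k+1)) (n-1-(k+1))) = Qf (n-1) X"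
    unfolding Qf_def by (rule prod.cong) (auto simp: algebra_simps)
  finally show ?thesis using last_facts(3,4)[OF assms] by simp
qed

lemma P2:
  assumes "3 \<le> n" "pos n X"
  shows "Qf n (rho_last n X) = X n (n-1) * D n (n-2) X / D (n-1) (n-2) X"
proof -
  have "Qf n (rho_last n X) = (\<Prod>k<n-1. if odd k then 1 / rho_last n X (n-k) (n-1-k) else rho_last n X (n-k) (n-1-k))"
    by (simp add: Qf_def)
  also have "\<dots> = X (n-0) (n-1-0) * (\<Prod>k<n-1. getc n X (n-k) (n-2-k)) /
      (\<Prod>k<n-1-1. X (n-(k+1)) (n-1-(k+1)))
     / (if even (n-1) then getc n X (n-(n-1-1)) (n-2-(n-1-1)) else 1)"
    by (rule alt_prod2[where R = "\<lambda>k. rho_last n X (n-k) (n-1-k)" and u = "\<lambda>k. getc n X (n-k) (n-2-k)"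
        and x = "\<lambda>k. X (n-k) (n-1-k)"]) (use last_facts[OF assms] assms in auto)
  also have "(\<Prod>k<n-1-1. X (n-(k+1)) (n-1-(k+1))) = D (n-1) (n-2) X"
    unfolding D_def by (rule prod.cong) (auto simp: algebra_simps)
  finally show ?thesis using last_facts(3,4)[OF assms] by simp
qed

lemma Sst_0[simp]: "Sst n 0 X = X" by (simp add: Sst_def)
lemma Sst_Suc: "Sst n (Suc k) X = rho_full n (Suc k) (Sst n k X)" by (simp add: Sst_def)
lemma Rmap_Sst: "2 \<le> n \<Longrightarrow> Rmap n X = Sst n (n-1) X"
  unfolding Rmap_def Sst_def by simp

lemma rho_full_frame:
  assumes "2 \<le> n" "1 \<le> j" "j \<le> n - 1" "\<not> (p = q + (n-j) \<and> 1 \<le> q \<and> q \<le> j)"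
  shows "rho_full n j X p q = X p q"
proof (cases "j = n - 1")
  case True
  then show ?thesis using assms by (auto simp: rho_full_def intro!: rho_last_frame)
next
  case False
  then show ?thesis using assms by (auto simp: rho_full_def rho_chain intro!: chain_frame)
qed

lemma pos_rho_full: "pos n X \<Longrightarrow> 2 \<le> n \<Longrightarrow> j \<le> n - 1 \<Longrightarrow> pos n (rho_full n j X)"
  by (cases "j = n - 1") (auto simp: rho_full_def rho_chain intro!: pos_rho_last pos_chain)

lemma pos_Sst: "pos n X \<Longrightarrow> 2 \<le> n \<Longrightarrow> k \<le> n - 1 \<Longrightarrow> pos n (Sst n k X)"
  by (induction k) (auto simp: Sst_Suc intro!: pos_rho_full)

lemma Sst_frame:
  assumes "2 \<le> n" "k1 \<le> k2" "k2 \<le> n - 1"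
    "\<And>j. k1 < j \<Longrightarrow> j \<le> k2 \<Longrightarrow> \<not> (p = q + (n-j) \<and> 1 \<le> q \<and> q \<le> j)"
  shows "Sst n k2 X p q = Sst n k1 X p q"
  using assms
proof (induction k2)
  case 0 then show ?case by simp
next
  case (Suc k2)
  show ?case
  proof (cases "k1 = Suc k2")
    case True then show ?thesis by simp
  next
    case False
    have "Sst n (Suc k2) X p q = Sst n k2 X p q"
      unfolding Sst_Suc by (rule rho_full_frame) (use Suc.prems(1,2,3) Suc.prems(4)[of "Suc k2"] False in auto)
    also have "\<dots> = Sst n k1 X p q" using Suc False by auto
    finally show ?thesis .
  qed
qed

lemma D_Sst:
  assumes "2 \<le> n" "k1 \<le> k2" "k2 \<le> n - 1" "jj \<le> m"
    "\<And>j. k1 < j \<Longrightarrow> j \<le> k2 \<Longrightarrow> m - jj \<noteq> n - j"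
  shows "D m jj (Sst n k2 X) = D m jj (Sst n k1 X)"
proof (rule D_cong)
  fix i assume i: "i < jj"
  show "Sst n k2 X (m - i) (jj - i) = Sst n k1 X (m - i) (jj - i)"
  proof (rule Sst_frame)
    fix j assume j: "k1 < j" "j \<le> k2"
    have "m - jj \<noteq> n - j" using assms(5) j .
    then show "\<not> (m - i = jj - i + (n - j) \<and> 1 \<le> jj - i \<and> jj - i \<le> j)" using i assms(4) by auto
  qed (use assms in auto)
qed

lemma recA:
  assumes "1 \<le> j" "j \<le> n - 2" "pos n Y"
  shows "D n j (Rmap n Y) * D (n-1) (j-1) Y = Y n j * D (n-1) j Y * D n (j-1) (Rmap n Y)"
proof -
  obtain j' where j': "j = Suc j'" using assms by (cases j) auto
  have n2: "2 \<le> n" using assms by auto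
  define X where "X = Sst n j' Y"
  have posX: "pos n X" unfolding X_def using assms j' by (intro pos_Sst) auto
  have jl: "Suc j' \<noteq> n - 1" using assms j' by auto
  have SjY: "Sst n j Y = chain (n - j) j X"
    unfolding X_def j' Sst_Suc using jl by (simp add: rho_full_def rho_chain)
  have cD: "D (n - j + Suc j') (Suc j') (chain (n - j) (Suc j') X) * D (n - j + j') j' X
         = X (n - j + Suc j') (Suc j') * D (n - j + j') (Suc j') X * D (n - j + Suc j') j' X"
    by (rule chain_D) (use assms posX j' in auto)
  have ar: "n - j + Suc j' = n" "n - j + j' = n - 1" using assms j' by auto
  have cD': "D n j (Sst n j Y) * D (n-1) j' X = X n j * D (n-1) j X * D n j' X"
    using cD[unfolded ar] SjY j' by simp
  have a: "D n j (Rmap n Y) = D n j (Sst n j Y)"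
    unfolding Rmap_Sst[OF n2] by (rule D_Sst) (use assms in auto)
  have b: "D (n-1) j' X = D (n-1) j' Y"
    unfolding X_def using D_Sst[of n 0 j' j' "n-1" Y] assms j' by auto
  have c: "X n j = Y n j"
    unfolding X_def using Sst_frame[of n 0 j' n j Y] assms j' by auto
  have d: "D (n-1) j X = D (n-1) j Y"
    unfolding X_def using D_Sst[of n 0 j' j "n-1" Y] assms j' by auto
  have e: "D n j' X = D n j' (Rmap n Y)"
    unfolding X_def Rmap_Sst[OF n2] by (rule D_Sst[symmetric]) (use assms j' in auto)
  show ?thesis using cD' a b c d e j' by simp
qed

lemma lemA:
  assumes "j \<le> n - 2" "pos n Y" "2 \<le> n"
  shows "D n j (Rmap n Y) = D (n-1) j Y * (\<Prod>k=1..j. Y n k)"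
  using assms
proof (induction j)
  case 0 then show ?case by simp
next
  case (Suc j)
  have r: "D n (Suc j) (Rmap n Y) * D (n-1) j Y = Y n (Suc j) * D (n-1) (Suc j) Y * D n j (Rmap n Y)"
    using recA[of "Suc j" n Y] Suc.prems by simp
  have p: "D (n-1) j Y > 0" using Suc.prems by (intro D_pos[where N = n]) auto
  have ih: "D n j (Rmap n Y) = D (n-1) j Y * (\<Prod>k=1..j. Y n k)" using Suc by auto
  have "D n (Suc j) (Rmap n Y) * D (n-1) j Y = (D (n-1) (Suc j) Y * (\<Prod>k=1..Suc j. Y n k)) * D (n-1) j Y"
    using r ih by (simp add: prod.cl_ivl_Suc algebra_simps)
  then show ?case using p by simp
qed

lemma Ttri_le2: "n \<le> 2 \<Longrightarrow> Ttri n X = X"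
  by (subst Ttri.simps) simp

lemma Ttri_ge3: "3 \<le> n \<Longrightarrow> Ttri n X = Rmap n (\<lambda>i j. if i = n then X i j else Ttri (n-1) X i j)"
  by (subst Ttri.simps) simp

lemma Qf_cong: "(\<And>k. k < m - 1 \<Longrightarrow> X (m-k) (m-1-k) = Y (m-k) (m-1-k)) \<Longrightarrow> Qf m X = Qf m Y"
  unfolding Qf_def by (rule prod.cong) auto

lemma pos_Ttri:
  assumes W: "\<And>i j. 1 \<le> j \<Longrightarrow> j < i \<Longrightarrow> i \<le> N \<Longrightarrow> W i j > 0"
  shows "2 \<le> m \<Longrightarrow> m \<le> N \<Longrightarrow> pos m (Ttri m W)"
proof (induction m rule: nat_induct_at_least)
  case base then show ?case using W by (simp add: Ttri_le2 pos_def)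
next
  case (Suc m)
  define Y where "Y = (\<lambda>i j. if i = Suc m then W i j else Ttri m W i j)"
  have pY: "pos (Suc m) Y" using Suc W unfolding pos_def Y_def by auto
  have "Ttri (Suc m) W = Rmap (Suc m) (\<lambda>i j. if i = Suc m then W i j else Ttri (Suc m - 1) W i j)"
    by (rule Ttri_ge3) (use Suc in auto)
  then have "Ttri (Suc m) W = Rmap (Suc m) Y" unfolding Y_def diff_Suc_1 .
  then show ?case using pY Suc by (simp add: Rmap_Sst pos_Sst)
qed

lemma lemC:
  assumes W: "\<And>i j. 1 \<le> j \<Longrightarrow> j < i \<Longrightarrow> i \<le> N \<Longrightarrow> W i j > 0"
    and m: "2 \<le> m" "m \<le> N"
  shows "Qf m (Ttri m W) = (\<Prod>l=1..m-1. W m l)"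
proof (cases "m = 2")
  case True then show ?thesis by (simp add: Ttri_le2 Qf_def)
next
  case False
  then have m3: "3 \<le> m" using m by auto
  define Y where "Y = (\<lambda>i j. if i = m then W i j else Ttri (m-1) W i j)"
  have pT: "pos (m-1) (Ttri (m-1) W)" using pos_Ttri[OF W] m3 m by auto
  have pY: "pos m Y" using pT W m unfolding pos_def Y_def by auto
  define X where "X = Sst m (m-2) Y"
  have pX: "pos m X" unfolding X_def using pY m3 by (intro pos_Sst) auto
  have sp: "m - 1 = Suc (m - 2)" using m3 by auto
  have RS: "Rmap m Y = Sst m (m-1) Y" by (rule Rmap_Sst) (use m3 in auto)
  have RY: "Rmap m Y = rho_last m X"
    unfolding RS X_def sp Sst_Suc using sp by (simp add: rho_full_def)
  have T: "Ttri m W = Rmap m Y" unfolding Y_def using m3 by (simp add: Ttri_ge3)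
  have e1: "X m (m-1) = W m (m-1)"
    unfolding X_def using Sst_frame[of m 0 "m-2" m "m-1" Y] m3 by (auto simp: Y_def)
  have e2: "D m (m-2) X = D m (m-2) (Rmap m Y)"
    unfolding X_def RS using D_Sst[of m "m-2" "m-1" "m-2" m Y] m3 by auto
  have e3: "D m (m-2) (Rmap m Y) = D (m-1) (m-2) Y * (\<Prod>k=1..m-2. Y m k)"
    by (rule lemA) (use pY m3 in auto)
  have e4: "D (m-1) (m-2) X = D (m-1) (m-2) Y"
    unfolding X_def using D_Sst[of m 0 "m-2" "m-2" "m-1" Y] m3 by auto
  have p: "D (m-1) (m-2) Y > 0" using pY m3 by (intro D_pos[where N = m]) auto
  have e5: "(\<Prod>k=1..m-2. Y m k) = (\<Prod>k=1..m-2. W m k)" by (simp add: Y_def)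
  have "Qf m (Ttri m W) = X m (m-1) * D m (m-2) X / D (m-1) (m-2) X"
    unfolding T RY by (rule P2) (use m3 pX in auto)
  also have "\<dots> = W m (m-1) * (\<Prod>k=1..m-2. W m k)"
    unfolding e1 e2 e3 e4 e5 using p by simp
  also have "\<dots> = (\<Prod>l=1..m-1. W m l)" unfolding sp by (simp add: prod.cl_ivl_Suc)
  finally show ?thesis .
qed

lemma main_gen:
  assumes W: "\<And>i j. 1 \<le> j \<Longrightarrow> j < i \<Longrightarrow> i \<le> N \<Longrightarrow> W i j > 0"
  shows "2 \<le> n \<Longrightarrow> n \<le> N \<Longrightarrow> \<forall>j. 1 \<le> j \<and> j \<le> n - 1 \<longrightarrow>
           tau n j (Ttri n W) = (\<Prod>l = 1..j - 1. W j l) * (\<Prod>k = j + 1..n. W k j)"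
proof (induction n rule: nat_induct_at_least)
  case base
  show ?case
  proof (intro allI impI)
    fix j :: nat assume "1 \<le> j \<and> j \<le> 2 - 1"
    then have j: "j = 1" by auto
    show "tau 2 j (Ttri 2 W) = (\<Prod>l = 1..j - 1. W j l) * (\<Prod>k = j + 1..2. W k j)"
      unfolding j by (simp add: Ttri_le2 tau_def D_def numeral_2_eq_2)
  qed
next
  case (Suc m)
  define n where "n = Suc m"
  define Y where "Y = (\<lambda>i j. if i = n then W i j else Ttri m W i j)"
  have m2: "2 \<le> m" "Suc m \<le> N" using Suc by auto
  have pT: "pos m (Ttri m W)" using pos_Ttri[OF W] m2 by auto
  have pY: "pos n Y" using pT W m2 unfolding pos_def Y_def n_def by auto
  have "Ttri (Suc m) W = Rmap (Suc m) (\<lambda>i j. if i = Suc m then W i j else Ttri (Suc m - 1) W i j)"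
    by (rule Ttri_ge3) (use m2 in auto)
  then have T: "Ttri n W = Rmap n Y" unfolding Y_def diff_Suc_1 n_def .
  have n2: "2 \<le> n" using m2 n_def by auto
  have RS: "Rmap n Y = Sst n m Y" using Rmap_Sst[OF n2] n_def by simp
  have IH: "\<forall>j. 1 \<le> j \<and> j \<le> m - 1 \<longrightarrow>
           tau m j (Ttri m W) = (\<Prod>l = 1..j - 1. W j l) * (\<Prod>k = j + 1..m. W k j)"
    using Suc by auto
  have DY: "D m jj Y = D m jj (Ttri m W)" for jj
    by (rule D_cong) (auto simp: Y_def n_def)
  show ?case unfolding n_def[symmetric]
  proof (intro allI impI)
    fix j assume j: "1 \<le> j \<and> j \<le> n - 1"
    have tgt: "(\<Prod>k = j + 1..n. W k j) = (\<Prod>k = j + 1..m. W k j) * W n j"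
      using j by (simp add: n_def prod.cl_ivl_Suc)
    show "tau n j (Ttri n W) = (\<Prod>l = 1..j - 1. W j l) * (\<Prod>k = j + 1..n. W k j)"
    proof (cases "j \<le> m - 1")
      case True
      have a1: "D n j (Rmap n Y) = D m j Y * (\<Prod>k=1..j. Y n k)"
        using lemA[of j n Y] True pY n2 n_def by simp
      have a2: "D n (j-1) (Rmap n Y) = D m (j-1) Y * (\<Prod>k=1..j-1. Y n k)"
        using lemA[of "j-1" n Y] True pY n2 n_def by simp
      have sp: "(\<Prod>k=1..j. Y n k) = (\<Prod>k=1..j-1. Y n k) * W n j"
        using j by (cases j) (auto simp: Y_def prod.cl_ivl_Suc)
      have pp: "(\<Prod>k=1..j-1. Y n k) > 0" using pY j unfolding pos_def by (intro prod_pos) auto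
      have gen: "P \<noteq> 0 \<Longrightarrow> (a * (P * w)) / (b * P) = a / b * w" for a b w P :: real
        by (cases "b = 0") (simp_all add: field_simps)
      have "tau n j (Ttri n W) = D m j (Ttri m W) * ((\<Prod>k=1..j-1. Y n k) * W n j) / (D m (j-1) (Ttri m W) * (\<Prod>k=1..j-1. Y n k))"
        unfolding tau_def T a1 a2 sp DY ..
      also have "\<dots> = D m j (Ttri m W) / D m (j-1) (Ttri m W) * W n j"
        by (rule gen) (metis pp less_irrefl)
      also have "\<dots> = tau m j (Ttri m W) * W n j" by (simp add: tau_def)
      also have "\<dots> = (\<Prod>l = 1..j - 1. W j l) * (\<Prod>k = j + 1..m. W k j) * W n j"
        using IH True j by simp
      finally show ?thesis using tgt by simp
    next
      case False
      then have jm: "j = m" using j n_def by auto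
      have m3: "3 \<le> n" using m2 n_def by auto
      define X where "X = Sst n (m-1) Y"
      have pX: "pos n X" unfolding X_def using pY n2 n_def by (intro pos_Sst) auto
      have sp: "m = Suc (m - 1)" using m2 by auto
      have RY: "Rmap n Y = rho_last n X"
      proof -
        have "Sst n m Y = rho_full n m (Sst n (m-1) Y)" by (metis Sst_Suc sp)
        moreover have "m = n - 1" using n_def by simp
        ultimately show ?thesis unfolding RS X_def by (simp add: rho_full_def)
      qed
      have nm: "n - 1 = m" "n - 2 = m - 1" using n_def by auto
      have b1: "D n m (rho_last n X) = X n m * D n (m-1) X * Qf m X"
        using P1[OF m3 pX] unfolding nm .
      have b2: "D n (m-1) (Rmap n Y) = D n (m-1) X"
        unfolding RS X_def by (rule D_Sst) (use n_def m2 in auto)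
      have b3: "X n m = W n m"
      proof -
        have "Sst n (m-1) Y n m = Sst n 0 Y n m"
          by (rule Sst_frame) (use n_def m2 in auto)
        then show ?thesis unfolding X_def by (simp add: Y_def)
      qed
      have b4: "Qf m X = Qf m Y"
      proof (rule Qf_cong)
        fix k assume k: "k < m - 1"
        have "Sst n (m-1) Y (m-k) (m-1-k) = Sst n 0 Y (m-k) (m-1-k)"
          by (rule Sst_frame) (use n_def m2 k in auto)
        then show "X (m-k) (m-1-k) = Y (m-k) (m-1-k)" unfolding X_def by simp
      qed
      have b5: "Qf m Y = Qf m (Ttri m W)" by (rule Qf_cong) (auto simp: Y_def n_def)
      have b6: "Qf m (Ttri m W) = (\<Prod>l=1..m-1. W m l)" by (rule lemC[OF W]) (use m2 in auto)
      have p: "D n (m-1) X > 0" by (rule D_pos[OF pX]) (use m2 n_def in auto)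
      have "tau n j (Ttri n W) = D n m (rho_last n X) / D n (m-1) (rho_last n X)"
        unfolding tau_def T jm using RY by simp
      also have "\<dots> = W n m * (\<Prod>l=1..m-1. W m l)"
        using b1 b2 b3 b4 b5 b6 p RY by simp
      finally show ?thesis using tgt jm n_def by simp
    qed
  qed
qed

theorem proposition6p5:
  fixes n :: nat and W :: tarray
  assumes "n \<ge> 2"
    and "\<And>i j. 1 \<le> j \<Longrightarrow> j < i \<Longrightarrow> i \<le> n \<Longrightarrow> W i j > 0"
  shows "\<forall>j. 1 \<le> j \<and> j \<le> n - 1 \<longrightarrow>
           tau n j (Ttri n W) = (\<Prod>l = 1..j - 1. W j l) * (\<Prod>k = j + 1..n. W k j)"
  using main_gen[OF assms(2)] assms(1) by auto

end
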